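(* Let $F : \mathbb{R}^n \to \mathbb{R}^n$ be real entire, i.e., real analytic with an extension to an entire map $\mathbb{C}^n \to \mathbb{C}^n$. Suppose the Koopman operator $\mathcal{K}_F g = g\circ F$ is bounded on the native space of the Gaussian RBF kernel over $\mathbb{R}^n$ (with domain the whole space). Then $F$ is affine: $F(x) = Ax + b$ for some $A \in \mathbb{R}^{n\times n}$ and $b \in \mathbb{R}^n$.
   Context: The Gaussian RBF kernel on $\mathbb{R}^n$ is $K(x,y) = \exp(-\|x-y\|_2^2/2)$. Its native space is the real RKHS of functions on $\mathbb{R}^n$ having this reproducing kernel. *)

theory Defs
  imports "HOL-Analysis.Analysis"
begin

definition gauss_kernel :: "real^'n \<Rightarrow> real^'n \<Rightarrow> real" where
  "gauss_kernel x y = exp (- (norm (x - y))\<^sup>2 / 2)"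

text \<open>Elements of the pre-Hilbert space span of kernel sections, represented by
  finite lists of (coefficient, centre) pairs: the function
  z maps to the sum of c * K(z,p).\<close>

definition pre_eval :: "(real \<times> (real^'n)) list \<Rightarrow> real^'n \<Rightarrow> real" where
  "pre_eval cs z = (\<Sum>(c,p)\<leftarrow>cs. c * gauss_kernel z p)"

definition pre_norm_sq :: "(real \<times> (real^'n)) list \<Rightarrow> real" where
  "pre_norm_sq cs = (\<Sum>(c,p)\<leftarrow>cs. \<Sum>(d,q)\<leftarrow>cs. c * d * gauss_kernel p q)"

definition pre_diff :: "(real \<times> (real^'n)) list \<Rightarrow> (real \<times> (real^'n)) list \<Rightarrow> (real \<times> (real^'n)) list" where
  "pre_diff a b = a @ map (\<lambda>(c,p). (- c, p)) b"

definition approximates :: "(nat \<Rightarrow> (real \<times> (real^'n)) list) \<Rightarrow> (real^'n \<Rightarrow> real) \<Rightarrow> bool" where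
  "approximates s f \<longleftrightarrow>
     (\<forall>e>0. \<exists>N. \<forall>m\<ge>N. \<forall>k\<ge>N. pre_norm_sq (pre_diff (s m) (s k)) < e) \<and>
     (\<forall>x. (\<lambda>k. pre_eval (s k) x) \<longlonglongrightarrow> f x)"

text \<open>The native space (RKHS) of the Gaussian kernel: the completion of the span of
  kernel sections, realised as functions on R^n.\<close>

definition native_space :: "(real^'n \<Rightarrow> real) set" where
  "native_space = {f. \<exists>s. approximates s f}"

definition native_norm :: "(real^'n \<Rightarrow> real) \<Rightarrow> real" where
  "native_norm f = (THE r. \<forall>s. approximates s f \<longrightarrow> (\<lambda>k. sqrt (pre_norm_sq (s k))) \<longlonglongrightarrow> r)"

definition koopman_bounded :: "(real^'n \<Rightarrow> real^'n) \<Rightarrow> bool" where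
  "koopman_bounded F \<longleftrightarrow>
     (\<forall>g\<in>native_space. g \<circ> F \<in> native_space) \<and>
     (\<exists>C. \<forall>g\<in>native_space. native_norm (g \<circ> F) \<le> C * native_norm g)"

definition entire_map :: "(complex^'n \<Rightarrow> complex^'m) \<Rightarrow> bool" where
  "entire_map G \<longleftrightarrow>
     (\<forall>z. \<exists>L. (G has_derivative L) (at z) \<and> (\<forall>c v. L (c *s v) = c *s L v))"

definition real_entire :: "(real^'n \<Rightarrow> real^'m) \<Rightarrow> bool" where
  "real_entire F \<longleftrightarrow>
     (\<exists>G. entire_map G \<and>
        (\<forall>x. G (\<chi> i. complex_of_real (x $ i)) = (\<chi> j. complex_of_real (F x $ j))))"

end

theory Submission
  imports Defs "HOL-Library.FuncSet" "HOL-Complex_Analysis.Complex_Analysis"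
begin

lemma sum_list_swap: "(\<Sum>x\<leftarrow>xs. \<Sum>y\<leftarrow>ys. f x y) = (\<Sum>y\<leftarrow>ys. \<Sum>x\<leftarrow>xs. f x y :: real)"
  by (induction xs) (auto simp: sum_list_addf)

lemma gauss_sym: "gauss_kernel x y = gauss_kernel y x"
  by (simp add: gauss_kernel_def norm_minus_commute)

lemma gauss_self[simp]: "gauss_kernel x x = 1"
  by (simp add: gauss_kernel_def)

definition pinner :: "(real \<times> (real^'n)) list \<Rightarrow> (real \<times> (real^'n)) list \<Rightarrow> real" where
  "pinner a b = (\<Sum>(c,p)\<leftarrow>a. c * pre_eval b p)"

definition pscale :: "real \<Rightarrow> (real \<times> (real^'n)) list \<Rightarrow> (real \<times> (real^'n)) list" where
  "pscale t a = map (\<lambda>(c,p). (t*c,p)) a"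

lemma pre_eval_append[simp]: "pre_eval (a@b) z = pre_eval a z + pre_eval b z"
  by (simp add: pre_eval_def)

lemma pre_eval_scale[simp]: "pre_eval (pscale t a) z = t * pre_eval a z"
  unfolding pre_eval_def pscale_def
  by (induction a) (auto simp: algebra_simps)

lemma pre_eval_diff[simp]: "pre_eval (pre_diff a b) z = pre_eval a z - pre_eval b z"
proof -
  have "pre_eval (map (\<lambda>(c,p). (- c, p)) b) z = - pre_eval b z"
    unfolding pre_eval_def by (induction b) auto
  then show ?thesis by (simp add: pre_diff_def)
qed

lemma pinner_append_left: "pinner (a@b) d = pinner a d + pinner b d"
  by (simp add: pinner_def)

lemma pinner_scale_left: "pinner (pscale t a) d = t * pinner a d"
  unfolding pinner_def pscale_def by (induction a) (auto simp: algebra_simps)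

lemma pinner_diff_left: "pinner (pre_diff a b) d = pinner a d - pinner b d"
proof -
  have "pinner (map (\<lambda>(c,p). (- c, p)) b) d = - pinner b d"
    unfolding pinner_def by (induction b) auto
  then show ?thesis by (simp add: pre_diff_def pinner_append_left)
qed

lemma pinner_append_right: "pinner d (a@b) = pinner d a + pinner d b"
  unfolding pinner_def by (induction d) (auto simp: algebra_simps)

lemma pinner_scale_right: "pinner d (pscale t a) = t * pinner d a"
  unfolding pinner_def by (induction d) (auto simp: algebra_simps)

lemma pinner_diff_right: "pinner d (pre_diff a b) = pinner d a - pinner d b"
  unfolding pinner_def by (induction d) (auto simp: algebra_simps)

lemma pinner_alt: "pinner a b = (\<Sum>(c,p)\<leftarrow>a. \<Sum>(d,q)\<leftarrow>b. c * d * gauss_kernel p q)"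
  unfolding pinner_def pre_eval_def
  by (simp add: sum_list_const_mult[symmetric] split_def mult.assoc gauss_sym)

lemma pinner_sym: "pinner a b = pinner b a"
proof -
  have "(\<Sum>x\<leftarrow>a. \<Sum>y\<leftarrow>b. fst x * fst y * gauss_kernel (snd x) (snd y)) =
        (\<Sum>y\<leftarrow>b. \<Sum>x\<leftarrow>a. fst x * fst y * gauss_kernel (snd x) (snd y))"
    by (rule sum_list_swap)
  then show ?thesis unfolding pinner_alt
    by (simp add: split_def gauss_sym mult.commute mult.left_commute)
qed

lemma pre_norm_pinner: "pre_norm_sq a = pinner a a"
  by (simp add: pinner_alt pre_norm_sq_def)

lemma pinner_single: "pinner [(1,x)] b = pre_eval b x"
  by (simp add: pinner_def)


definition tup :: "nat \<Rightarrow> (nat \<Rightarrow> 'n::finite) set" where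
  "tup k = PiE {..<k} (\<lambda>_. UNIV)"

lemma finite_tup[simp]: "finite (tup k)"
  unfolding tup_def by (intro finite_PiE) auto

definition monot :: "'a::comm_ring_1^'n \<Rightarrow> (nat \<Rightarrow> 'n) \<Rightarrow> nat \<Rightarrow> 'a" where
  "monot x g k = (\<Prod>l<k. x $ g l)"

lemma pow_sum_tup:
  fixes a :: "'n::finite \<Rightarrow> 'a::comm_semiring_1"
  shows "(\<Sum>j\<in>UNIV. a j) ^ k = (\<Sum>g\<in>tup k. \<Prod>l<k. a (g l))"
proof -
  have "(\<Prod>l<k. \<Sum>j\<in>UNIV. a j) = (\<Sum>g\<in>tup k. \<Prod>l<k. a (g l))"
    unfolding tup_def by (rule prod_sum_PiE) auto
  then show ?thesis by (simp add: prod_constant)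
qed

lemma inner_pow_tup:
  fixes p q :: "real^'n"
  shows "(inner p q) ^ k = (\<Sum>g\<in>tup k. monot p g k * monot q g k)"
  unfolding inner_vec_def monot_def pow_sum_tup by (simp add: prod.distrib)

lemma sum_list_sum_swap:
  "(\<Sum>x\<leftarrow>xs. \<Sum>g\<in>A. f x g) = (\<Sum>g\<in>A. \<Sum>x\<leftarrow>xs. f x g :: 'b::comm_monoid_add)"
  by (induction xs) (auto simp: sum.distrib)

lemma sums_sum_list:
  assumes "\<And>x. x \<in> set xs \<Longrightarrow> (\<lambda>k. f x k) sums s x"
  shows "(\<lambda>k. \<Sum>x\<leftarrow>xs. f x k) sums (\<Sum>x\<leftarrow>xs. s x :: 'b::real_normed_vector)"
  using assms by (induction xs) (auto intro: sums_add)

definition phi :: "real^'n \<Rightarrow> real" where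
  "phi p = exp (- (norm p)\<^sup>2 / 2)"

lemma gauss_factor: "gauss_kernel p q = phi p * phi q * exp (inner p q)"
proof -
  have "(norm (p - q))\<^sup>2 = (norm p)\<^sup>2 - 2 * inner p q + (norm q)\<^sup>2"
    by (simp add: power2_norm_eq_inner inner_diff inner_commute)
  then show ?thesis
    by (simp add: gauss_kernel_def phi_def flip: exp_add)
qed

definition Pc :: "(real \<times> (real^'n::finite)) list \<Rightarrow> nat \<Rightarrow> (nat \<Rightarrow> 'n) \<Rightarrow> real" where
  "Pc cs k g = (\<Sum>(c,p)\<leftarrow>cs. c * phi p * monot p g k)"

lemma sum_list_mult_sum_list:
  "(\<Sum>x\<leftarrow>xs. f x) * (\<Sum>y\<leftarrow>ys. h y) = (\<Sum>x\<leftarrow>xs. \<Sum>y\<leftarrow>ys. f x * h y :: real)"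
  by (induction xs) (auto simp: distrib_right sum_list_const_mult)

lemma sum_list_div: "(\<Sum>x\<leftarrow>xs. f x / c) = (\<Sum>x\<leftarrow>xs. f x) / (c::real)"
  by (induction xs) (auto simp: add_divide_distrib)

lemma pre_norm_series:
  "(\<lambda>k. (\<Sum>g\<in>tup k. (Pc cs k g)\<^sup>2) / fact k) sums pre_norm_sq cs"
proof -
  have ts: "(\<lambda>k. c * d * (phi p * phi q * ((inner p q) ^ k / fact k))) sums (c * d * gauss_kernel p q)"
    for c d p q
  proof -
    have "(\<lambda>k. (inner p q) ^ k /\<^sub>R fact k) sums exp (inner p q)" by (rule exp_converges)
    then have "(\<lambda>k. (inner p q) ^ k / fact k) sums exp (inner p q)" by (simp add: divide_inverse mult.commute)
    then show ?thesis unfolding gauss_factor by (intro sums_mult) 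
  qed
  have kth: "(\<Sum>(c,p)\<leftarrow>cs. \<Sum>(d,q)\<leftarrow>cs. c * d * (phi p * phi q * ((inner p q) ^ k / fact k)))
      = (\<Sum>g\<in>tup k. (Pc cs k g)\<^sup>2) / fact k" for k
  proof -
    have "(\<Sum>(c,p)\<leftarrow>cs. \<Sum>(d,q)\<leftarrow>cs. c * d * (phi p * phi q * ((inner p q) ^ k / fact k)))
       = (\<Sum>(c,p)\<leftarrow>cs. \<Sum>(d,q)\<leftarrow>cs. \<Sum>g\<in>tup k. (c * phi p * monot p g k) * (d * phi q * monot q g k) / fact k)"
      by (simp add: inner_pow_tup sum_distrib_left sum_divide_distrib split_def algebra_simps)
    also have "\<dots> = (\<Sum>g\<in>tup k. \<Sum>(c,p)\<leftarrow>cs. \<Sum>(d,q)\<leftarrow>cs. (c * phi p * monot p g k) * (d * phi q * monot q g k) / fact k)"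
      by (simp add: split_def sum_list_sum_swap)
    also have "\<dots> = (\<Sum>g\<in>tup k. (Pc cs k g)\<^sup>2 / fact k)"
      unfolding Pc_def power2_eq_square sum_list_mult_sum_list
      by (simp add: split_def sum_list_div)
    finally show ?thesis by (simp add: sum_divide_distrib)
  qed
  have "(\<lambda>k. \<Sum>(c,p)\<leftarrow>cs. \<Sum>(d,q)\<leftarrow>cs. c * d * (phi p * phi q * ((inner p q) ^ k / fact k)))
        sums (\<Sum>(c,p)\<leftarrow>cs. \<Sum>(d,q)\<leftarrow>cs. c * d * gauss_kernel p q)"
    unfolding split_def
    by (intro sums_sum_list) (use ts in \<open>simp add: split_def\<close>)
  then show ?thesis unfolding kth pre_norm_sq_def .
qed

lemma pre_norm_nonneg: "pre_norm_sq cs \<ge> 0"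
  by (rule sums_le[OF _ sums_zero pre_norm_series]) (auto intro!: divide_nonneg_pos sum_nonneg)


lemma pinner_eval_cong_right:
  "(\<And>z. pre_eval x z = pre_eval y z) \<Longrightarrow> pinner a x = pinner a y"
  unfolding pinner_def by simp

lemma pre_norm_eval_cong:
  assumes "\<And>z. pre_eval x z = pre_eval y z"
  shows "pre_norm_sq x = pre_norm_sq y"
proof -
  have "pinner x x = pinner x y" by (rule pinner_eval_cong_right) (use assms in auto)
  also have "\<dots> = pinner y x" by (rule pinner_sym)
  also have "\<dots> = pinner y y" by (rule pinner_eval_cong_right) (use assms in auto)
  finally show ?thesis by (simp add: pre_norm_pinner)
qed

lemma pre_norm_append: "pre_norm_sq (a @ b) = pre_norm_sq a + 2 * pinner a b + pre_norm_sq b"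
  unfolding pre_norm_pinner pinner_append_left pinner_append_right
  using pinner_sym[of b a] by simp

lemma pinner_cs: "(pinner a b)\<^sup>2 \<le> pre_norm_sq a * pre_norm_sq b"
proof -
  have q: "0 \<le> pre_norm_sq a + 2 * t * pinner a b + t\<^sup>2 * pre_norm_sq b" for t
  proof -
    have "0 \<le> pre_norm_sq (a @ pscale t b)" by (rule pre_norm_nonneg)
    also have "\<dots> = pre_norm_sq a + 2 * t * pinner a b + t\<^sup>2 * pre_norm_sq b"
      unfolding pre_norm_append unfolding pre_norm_pinner pinner_scale_left pinner_scale_right
      by (simp add: power2_eq_square algebra_simps)
    finally show ?thesis .
  qed
  show ?thesis
  proof (cases "pre_norm_sq b = 0")
    case True
    have "pinner a b = 0"
    proof (rule ccontr)
      assume ne: "pinner a b \<noteq> 0"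
      define t where "t = - (pre_norm_sq a + 1) / (2 * pinner a b)"
      have "2 * t * pinner a b = - (pre_norm_sq a + 1)" using ne by (simp add: t_def)
      moreover have "t\<^sup>2 * pre_norm_sq b = 0" using True by simp
      ultimately show False using q[of t] by linarith
    qed
    then show ?thesis using True by simp
  next
    case False
    then have pos: "pre_norm_sq b > 0" using pre_norm_nonneg[of b] by simp
    define t where "t = - pinner a b / pre_norm_sq b"
    have "0 \<le> pre_norm_sq a + 2 * t * pinner a b + t\<^sup>2 * pre_norm_sq b" by (rule q)
    also have "\<dots> = pre_norm_sq a - (pinner a b)\<^sup>2 / pre_norm_sq b"
      using pos by (simp add: t_def power2_eq_square field_simps)
    finally show ?thesis using pos by (simp add: field_simps)
  qed
qed

lemma tendsto_sum_list:
  assumes "\<And>x. x \<in> set xs \<Longrightarrow> ((\<lambda>m. g m x) \<longlongrightarrow> l x) F"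
  shows "((\<lambda>m. \<Sum>x\<leftarrow>xs. g m x) \<longlongrightarrow> (\<Sum>x\<leftarrow>xs. l x :: 'b::real_normed_vector)) F"
  using assms by (induction xs) (auto intro: tendsto_add)

definition pn :: "(real \<times> (real^'n::finite)) list \<Rightarrow> real" where
  "pn a = sqrt (pre_norm_sq a)"

lemma pn_nonneg: "pn a \<ge> 0" using pre_norm_nonneg[of a] by (simp add: pn_def)

lemma pn_sq: "(pn a)\<^sup>2 = pre_norm_sq a"
  using pre_norm_nonneg[of a] by (simp add: pn_def)

lemma pinner_abs_le: "\<bar>pinner a b\<bar> \<le> pn a * pn b"
proof -
  have "\<bar>pinner a b\<bar> = sqrt ((pinner a b)\<^sup>2)" by simp
  also have "\<dots> \<le> sqrt (pre_norm_sq a * pre_norm_sq b)"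
    by (rule real_sqrt_le_mono[OF pinner_cs])
  also have "\<dots> = pn a * pn b" by (simp add: pn_def real_sqrt_mult)
  finally show ?thesis .
qed

lemma pn_append: "pn (a @ b) \<le> pn a + pn b"
proof -
  have "pre_norm_sq (a @ b) \<le> (pn a + pn b)\<^sup>2"
    unfolding pre_norm_append power2_sum pn_sq
    using pinner_abs_le[of a b] by simp
  then show ?thesis using pn_nonneg[of a] pn_nonneg[of b]
    by (simp add: pn_def real_sqrt_le_iff real_le_lsqrt)
qed

lemma pn_eval_cong: "(\<And>z. pre_eval x z = pre_eval y z) \<Longrightarrow> pn x = pn y"
  unfolding pn_def using pre_norm_eval_cong by metis

lemma pn_diff_triangle: "pn (pre_diff a b) \<le> pn (pre_diff a c) + pn (pre_diff c b)"
proof -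
  have "pn (pre_diff a b) = pn (pre_diff a c @ pre_diff c b)"
    by (rule pn_eval_cong) simp
  then show ?thesis using pn_append by simp
qed

lemma pn_diff_ge: "\<bar>pn a - pn b\<bar> \<le> pn (pre_diff a b)"
proof -
  have a: "pn a \<le> pn (pre_diff a b) + pn b"
  proof -
    have "pn a = pn (pre_diff a b @ b)" by (rule pn_eval_cong) simp
    then show ?thesis using pn_append[of "pre_diff a b" b] by simp
  qed
  have b: "pn b \<le> pn (pre_diff a b) + pn a"
  proof -
    have "pn b = pn (pre_diff b a @ a)" by (rule pn_eval_cong) simp
    moreover have "pn (pre_diff b a) = pn (pre_diff a b)"
    proof -
      have "pn (pre_diff b a) = pn (pscale (-1) (pre_diff a b))" by (rule pn_eval_cong) simp
      also have "\<dots> = pn (pre_diff a b)"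
        unfolding pn_def pre_norm_pinner pinner_scale_left pinner_scale_right by simp
      finally show ?thesis .
    qed
    ultimately show ?thesis using pn_append[of "pre_diff b a" a] by simp
  qed
  from a b show ?thesis by linarith
qed

lemma pre_norm_diff_sym: "pn (pre_diff a b) = pn (pre_diff b a)"
proof -
  have "pn (pre_diff b a) = pn (pscale (-1) (pre_diff a b))" by (rule pn_eval_cong) simp
  also have "\<dots> = pn (pre_diff a b)"
    unfolding pn_def pre_norm_pinner pinner_scale_left pinner_scale_right by simp
  finally show ?thesis by simp
qed

lemma approx_cauchy_pn:
  assumes "approximates s f" "e > 0"
  shows "\<exists>N. \<forall>m\<ge>N. \<forall>k\<ge>N. pn (pre_diff (s m) (s k)) < e"
proof -
  from assms obtain N where N: "\<forall>m\<ge>N. \<forall>k\<ge>N. pre_norm_sq (pre_diff (s m) (s k)) < e\<^sup>2"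
    unfolding approximates_def by (meson zero_less_power)
  show ?thesis
  proof (intro exI allI impI)
    fix m k assume "m \<ge> N" "k \<ge> N"
    with N have "pre_norm_sq (pre_diff (s m) (s k)) < e\<^sup>2" by auto
    then show "pn (pre_diff (s m) (s k)) < e"
      unfolding pn_def using assms(2) real_sqrt_less_iff[of _ "e\<^sup>2"] by simp
  qed
qed

lemma approx_pn_convergent:
  assumes "approximates s f"
  shows "convergent (\<lambda>k. pn (s k))"
proof -
  have "Cauchy (\<lambda>k. pn (s k))"
    unfolding Cauchy_def dist_real_def
  proof (intro allI impI)
    fix e :: real assume "e > 0"
    from approx_cauchy_pn[OF assms this] obtain N where N: "\<forall>m\<ge>N. \<forall>k\<ge>N. pn (pre_diff (s m) (s k)) < e" by blast
    show "\<exists>M. \<forall>m\<ge>M. \<forall>n\<ge>M. \<bar>pn (s m) - pn (s n)\<bar> < e"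
      using N pn_diff_ge by (meson le_less_trans)
  qed
  then show ?thesis by (simp add: Cauchy_convergent_iff)
qed

lemma approx_diff_zero:
  assumes s: "approximates s f" and t: "approximates t f"
  shows "(\<lambda>k. pn (pre_diff (s k) (t k))) \<longlonglongrightarrow> 0"
proof -
  define d where "d k = pre_diff (s k) (t k)" for k
  have dev: "(\<lambda>m. pre_eval (d m) x) \<longlonglongrightarrow> 0" for x
  proof -
    have "(\<lambda>m. pre_eval (s m) x - pre_eval (t m) x) \<longlonglongrightarrow> f x - f x"
      using s t unfolding approximates_def by (intro tendsto_diff) auto
    then show ?thesis by (simp add: d_def)
  qed
  have dc: "\<exists>N. \<forall>m\<ge>N. \<forall>k\<ge>N. pn (pre_diff (d m) (d k)) < e" if "e > 0" for e
  proof -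
    from approx_cauchy_pn[OF s, of "e/2"] that obtain N1 where N1: "\<forall>m\<ge>N1. \<forall>k\<ge>N1. pn (pre_diff (s m) (s k)) < e/2" by auto
    from approx_cauchy_pn[OF t, of "e/2"] that obtain N2 where N2: "\<forall>m\<ge>N2. \<forall>k\<ge>N2. pn (pre_diff (t m) (t k)) < e/2" by auto
    show ?thesis
    proof (intro exI[of _ "max N1 N2"] allI impI)
      fix m k assume "m \<ge> max N1 N2" "k \<ge> max N1 N2"
      have "pn (pre_diff (d m) (d k)) = pn (pre_diff (s m) (s k) @ pscale (-1) (pre_diff (t m) (t k)))"
        by (rule pn_eval_cong) (simp add: d_def)
      also have "\<dots> \<le> pn (pre_diff (s m) (s k)) + pn (pscale (-1) (pre_diff (t m) (t k)))"
        by (rule pn_append)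
      also have "pn (pscale (-1) (pre_diff (t m) (t k))) = pn (pre_diff (t m) (t k))"
        unfolding pn_def pre_norm_pinner pinner_scale_left pinner_scale_right by simp
      finally show "pn (pre_diff (d m) (d k)) < e"
        using N1 N2 \<open>m \<ge> max N1 N2\<close> \<open>k \<ge> max N1 N2\<close> by fastforce
    qed
  qed
  have key: "pn (d k) \<le> e" if "e > 0" "\<forall>m\<ge>N. \<forall>k\<ge>N. pn (pre_diff (d m) (d k)) < e" "k \<ge> N" for e N k
  proof -
    have lim: "(\<lambda>m. pinner (d k) (d m)) \<longlonglongrightarrow> 0"
    proof -
      have "(\<lambda>m. \<Sum>x\<leftarrow>d k. fst x * pre_eval (d m) (snd x)) \<longlonglongrightarrow> (\<Sum>x\<leftarrow>d k. fst x * 0)"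
        by (intro tendsto_sum_list tendsto_mult tendsto_const dev)
      then show ?thesis by (simp add: pinner_def split_def)
    qed
    have bnd: "pre_norm_sq (d k) \<le> pn (d k) * e + \<bar>pinner (d k) (d m)\<bar>" if "m \<ge> N" for m
    proof -
      have "pre_norm_sq (d k) = pinner (d k) (pre_diff (d k) (d m)) + pinner (d k) (d m)"
        by (simp add: pre_norm_pinner pinner_diff_right)
      moreover have "\<bar>pinner (d k) (pre_diff (d k) (d m))\<bar> \<le> pn (d k) * e"
      proof -
        have "\<bar>pinner (d k) (pre_diff (d k) (d m))\<bar> \<le> pn (d k) * pn (pre_diff (d k) (d m))"
          by (rule pinner_abs_le)
        also have "\<dots> \<le> pn (d k) * e"
          using that \<open>k \<ge> N\<close> \<open>\<forall>m\<ge>N. \<forall>k\<ge>N. pn (pre_diff (d m) (d k)) < e\<close> pn_nonneg[of "d k"]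
          by (intro mult_left_mono) (auto intro: less_imp_le)
        finally show ?thesis .
      qed
      ultimately show ?thesis by linarith
    qed
    have "(\<lambda>m. pn (d k) * e + \<bar>pinner (d k) (d m)\<bar>) \<longlonglongrightarrow> pn (d k) * e + \<bar>0\<bar>"
      by (intro tendsto_add tendsto_const tendsto_rabs lim)
    then have "pre_norm_sq (d k) \<le> pn (d k) * e"
      using bnd by (intro LIMSEQ_le_const) auto
    then have "(pn (d k))\<^sup>2 \<le> pn (d k) * e" by (simp add: pn_sq)
    then show ?thesis using pn_nonneg[of "d k"]
      by (cases "pn (d k) = 0") (use \<open>e > 0\<close> in \<open>auto simp: power2_eq_square\<close>)
  qed
  show ?thesis
  proof (rule LIMSEQ_I)
    fix r :: real assume "r > 0"
    then obtain N where N: "\<forall>m\<ge>N. \<forall>k\<ge>N. pn (pre_diff (d m) (d k)) < r/2"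
      using dc[of "r/2"] by auto
    show "\<exists>no. \<forall>n\<ge>no. norm (pn (pre_diff (s n) (t n)) - 0) < r"
    proof (intro exI allI impI)
      fix n assume "n \<ge> N"
      then have "pn (d n) \<le> r/2" using key[of "r/2" N n] N \<open>r > 0\<close> by auto
      then show "norm (pn (pre_diff (s n) (t n)) - 0) < r"
        using pn_nonneg[of "d n"] \<open>r > 0\<close> by (simp add: d_def)
    qed
  qed
qed

lemma native_norm_lim:
  assumes s: "approximates s f"
  shows "(\<lambda>k. pn (s k)) \<longlonglongrightarrow> native_norm f"
proof -
  obtain r where r: "(\<lambda>k. pn (s k)) \<longlonglongrightarrow> r"
    using approx_pn_convergent[OF s] by (auto simp: convergent_def)
  have all: "(\<lambda>k. pn (t k)) \<longlonglongrightarrow> r" if t: "approximates t f" for t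
  proof -
    have "(\<lambda>k. pn (s k) - pn (t k)) \<longlonglongrightarrow> 0"
    proof (rule tendsto_sandwich[of "\<lambda>k. - pn (pre_diff (s k) (t k))" _ _ "\<lambda>k. pn (pre_diff (s k) (t k))"])
      show "\<forall>\<^sub>F n in sequentially. - pn (pre_diff (s n) (t n)) \<le> pn (s n) - pn (t n)"
      proof (intro always_eventually allI)
        fix n show "- pn (pre_diff (s n) (t n)) \<le> pn (s n) - pn (t n)"
          using pn_diff_ge[of "s n" "t n"] by (simp add: abs_le_iff)
      qed
      show "\<forall>\<^sub>F n in sequentially. pn (s n) - pn (t n) \<le> pn (pre_diff (s n) (t n))"
      proof (intro always_eventually allI)
        fix n show "pn (s n) - pn (t n) \<le> pn (pre_diff (s n) (t n))"
          using pn_diff_ge[of "s n" "t n"] by (simp add: abs_le_iff)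
      qed
      show "(\<lambda>k. - pn (pre_diff (s k) (t k))) \<longlonglongrightarrow> 0"
        using tendsto_minus[OF approx_diff_zero[OF s t]] by simp
      show "(\<lambda>k. pn (pre_diff (s k) (t k))) \<longlonglongrightarrow> 0" by (rule approx_diff_zero[OF s t])
    qed
    then have "(\<lambda>k. pn (s k) - (pn (s k) - pn (t k))) \<longlonglongrightarrow> r - 0"
      by (intro tendsto_diff r)
    then show ?thesis by simp
  qed
  have "native_norm f = r"
    unfolding native_norm_def
  proof (rule the_equality)
    show "\<forall>s. approximates s f \<longrightarrow> (\<lambda>k. sqrt (pre_norm_sq (s k))) \<longlonglongrightarrow> r"
      using all by (simp add: pn_def)
    show "r' = r" if "\<forall>s. approximates s f \<longrightarrow> (\<lambda>k. sqrt (pre_norm_sq (s k))) \<longlonglongrightarrow> r'" for r'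
    proof -
      have "(\<lambda>k. pn (s k)) \<longlonglongrightarrow> r'" using that s by (simp add: pn_def)
      then show ?thesis using r by (rule LIMSEQ_unique)
    qed
  qed
  then show ?thesis using r by simp
qed


definition cvec :: "real^'n \<Rightarrow> complex^'n" where
  "cvec x = (\<chi> i. complex_of_real (x $ i))"

definition KC :: "complex^'n::finite \<Rightarrow> real^'n \<Rightarrow> complex" where
  "KC z p = exp (- (\<Sum>j\<in>UNIV. (z $ j - complex_of_real (p $ j))\<^sup>2) / 2)"

definition ceval :: "(real \<times> (real^'n::finite)) list \<Rightarrow> complex^'n \<Rightarrow> complex" where
  "ceval cs z = (\<Sum>(c,p)\<leftarrow>cs. complex_of_real c * KC z p)"

definition phic :: "complex^'n::finite \<Rightarrow> complex" where
  "phic z = exp (- (\<Sum>j\<in>UNIV. (z $ j)\<^sup>2) / 2)"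

lemma norm_sq_sum: "(norm (p::real^'n::finite))\<^sup>2 = (\<Sum>j\<in>UNIV. (p $ j)\<^sup>2)"
  unfolding power2_norm_eq_inner inner_vec_def by (simp add: power2_eq_square)

lemma KC_factor:
  "KC z p = phic z * complex_of_real (phi p) * exp (\<Sum>j\<in>UNIV. z $ j * complex_of_real (p $ j))"
proof -
  have e: "- (\<Sum>j\<in>UNIV. (z $ j - complex_of_real (p $ j))\<^sup>2) / 2 =
     - (\<Sum>j\<in>UNIV. (z $ j)\<^sup>2) / 2 + complex_of_real (- (norm p)\<^sup>2 / 2) + (\<Sum>j\<in>UNIV. z $ j * complex_of_real (p $ j))"
    unfolding norm_sq_sum power2_diff
    by (simp add: sum.distrib sum_subtractf sum_distrib_left field_simps)
  show ?thesis unfolding KC_def phic_def phi_def e exp_add of_real_exp by simp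
qed

lemma KC_real: "KC (cvec x) p = complex_of_real (gauss_kernel x p)"
proof -
  have "(\<Sum>j\<in>UNIV. (cvec x $ j - complex_of_real (p $ j))\<^sup>2) = complex_of_real ((norm (x - p))\<^sup>2)"
    unfolding norm_sq_sum by (simp add: cvec_def)
  then show ?thesis by (simp add: KC_def gauss_kernel_def of_real_exp)
qed

lemma ceval_real: "ceval cs (cvec x) = complex_of_real (pre_eval cs x)"
  unfolding ceval_def pre_eval_def KC_real
  by (induction cs) auto

lemma ceval_diff: "ceval (pre_diff a b) z = ceval a z - ceval b z"
proof -
  have "ceval (map (\<lambda>(c,p). (- c, p)) b) z = - ceval b z"
    unfolding ceval_def by (induction b) auto
  then show ?thesis by (simp add: pre_diff_def ceval_def)
qed

lemma exp_series_C:
  "(\<lambda>k. (\<Sum>g\<in>tup k. monot z g k * complex_of_real (monot p g k)) / complex_of_real (fact k))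
     sums exp (\<Sum>j\<in>UNIV. z $ j * complex_of_real (p $ j))"
proof -
  have "(\<lambda>k. (\<Sum>j\<in>UNIV. z $ j * complex_of_real (p $ j)) ^ k /\<^sub>R fact k) sums exp (\<Sum>j\<in>UNIV. z $ j * complex_of_real (p $ j))"
    by (rule exp_converges)
  moreover have "(\<Sum>j\<in>UNIV. z $ j * complex_of_real (p $ j)) ^ k /\<^sub>R fact k =
     (\<Sum>g\<in>tup k. monot z g k * complex_of_real (monot p g k)) / complex_of_real (fact k)" for k
    unfolding pow_sum_tup monot_def
    by (simp add: prod.distrib scaleR_conv_of_real divide_inverse mult.commute)
  ultimately show ?thesis by simp
qed

lemma Pc_Cons: "Pc (x#cs) k g = fst x * phi (snd x) * monot (snd x) g k + Pc cs k g"
  by (simp add: Pc_def split_def)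

lemma Pc_Nil: "Pc [] k g = 0"
  by (simp add: Pc_def)

lemma ceval_series:
  "(\<lambda>k. (\<Sum>g\<in>tup k. monot z g k * complex_of_real (Pc cs k g)) / complex_of_real (fact k))
     sums (ceval cs z / phic z)"
proof -
  have ne: "phic z \<noteq> 0" by (simp add: phic_def)
  have "(\<lambda>k. \<Sum>x\<leftarrow>cs. complex_of_real (fst x) * complex_of_real (phi (snd x)) *
        ((\<Sum>g\<in>tup k. monot z g k * complex_of_real (monot (snd x) g k)) / complex_of_real (fact k)))
     sums (\<Sum>x\<leftarrow>cs. complex_of_real (fst x) * complex_of_real (phi (snd x)) *
         exp (\<Sum>j\<in>UNIV. z $ j * complex_of_real (snd x $ j)))"
    by (intro sums_sum_list sums_mult exp_series_C)
  moreover have "(\<Sum>x\<leftarrow>cs. complex_of_real (fst x) * complex_of_real (phi (snd x)) *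
        ((\<Sum>g\<in>tup k. monot z g k * complex_of_real (monot (snd x) g k)) / complex_of_real (fact k)))
     = (\<Sum>g\<in>tup k. monot z g k * complex_of_real (Pc cs k g)) / complex_of_real (fact k)" for k
  proof (induction cs)
    case Nil then show ?case by (simp add: Pc_Nil)
  next
    case (Cons a cs)
    show ?case unfolding sum_list.Cons list.map Cons Pc_Cons
      by (simp add: sum.distrib distrib_left add_divide_distrib sum_divide_distrib sum_distrib_left algebra_simps)
  qed
  moreover have "(\<Sum>x\<leftarrow>cs. complex_of_real (fst x) * complex_of_real (phi (snd x)) *
         exp (\<Sum>j\<in>UNIV. z $ j * complex_of_real (snd x $ j))) = ceval cs z / phic z"
    unfolding ceval_def KC_factor using ne
    by (induction cs) (auto simp: split_def field_simps)
  ultimately show ?thesis by simp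
qed


lemma norm_monot_sq_sum:
  "(\<Sum>g\<in>tup k. (cmod (monot z g k))\<^sup>2) = (\<Sum>j\<in>UNIV. (cmod (z $ j))\<^sup>2) ^ k"
  unfolding pow_sum_tup monot_def by (simp add: prod_norm[symmetric] prod_power_distrib)

lemma sqrt_div_helper: "(x / sqrt (fact k)) * (y / sqrt (fact k)) = x * y / (fact k :: real)"
proof -
  have "sqrt (fact k) * sqrt (fact k) = (fact k :: real)" by (simp add: real_sqrt_mult_self)
  then show ?thesis by (simp add: field_simps)
qed

lemma partial_bound:
  "(cmod (\<Sum>k<N. (\<Sum>g\<in>tup k. monot z g k * complex_of_real (Pc cs k g)) / complex_of_real (fact k)))\<^sup>2
   \<le> exp (\<Sum>j\<in>UNIV. (cmod (z $ j))\<^sup>2) * pre_norm_sq cs"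
proof -
  define A where "A = Sigma {..<N} (\<lambda>k. tup k :: (nat \<Rightarrow> 'a) set)"
  define a where "a = (\<lambda>(k,g). cmod (monot z g k) / sqrt (fact k))"
  define b where "b = (\<lambda>(k,g). \<bar>Pc cs k g\<bar> / sqrt (fact k))"
  have "cmod (\<Sum>k<N. (\<Sum>g\<in>tup k. monot z g k * complex_of_real (Pc cs k g)) / complex_of_real (fact k))
      \<le> (\<Sum>k<N. \<Sum>g\<in>tup k. cmod (monot z g k * complex_of_real (Pc cs k g) / complex_of_real (fact k)))"
    by (simp add: sum_divide_distrib) (intro order_trans[OF norm_sum] sum_mono norm_sum)
  also have "\<dots> = (\<Sum>x\<in>A. a x * b x)"
    unfolding A_def a_def b_def
    by (subst sum.Sigma) (auto simp: norm_mult norm_divide sqrt_div_helper intro!: sum.cong)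
  finally have le1: "cmod (\<Sum>k<N. (\<Sum>g\<in>tup k. monot z g k * complex_of_real (Pc cs k g)) / complex_of_real (fact k))
      \<le> (\<Sum>x\<in>A. a x * b x)" .
  have "(\<Sum>x\<in>A. a x * b x)\<^sup>2 \<le> (\<Sum>x\<in>A. (a x)\<^sup>2) * (\<Sum>x\<in>A. (b x)\<^sup>2)"
    by (rule Cauchy_Schwarz_ineq_sum)
  also have "(\<Sum>x\<in>A. (a x)\<^sup>2) = (\<Sum>k<N. \<Sum>g\<in>tup k. (cmod (monot z g k))\<^sup>2 / fact k)"
    unfolding A_def a_def
    by (subst sum.Sigma) (auto simp: power_divide intro!: sum.cong)
  also have "\<dots> = (\<Sum>k<N. (\<Sum>j\<in>UNIV. (cmod (z $ j))\<^sup>2) ^ k / fact k)"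
    by (simp add: sum_divide_distrib[symmetric] norm_monot_sq_sum)
  also have "\<dots> \<le> exp (\<Sum>j\<in>UNIV. (cmod (z $ j))\<^sup>2)"
  proof -
    have "(\<lambda>k. (\<Sum>j\<in>UNIV. (cmod (z $ j))\<^sup>2) ^ k /\<^sub>R fact k) sums exp (\<Sum>j\<in>UNIV. (cmod (z $ j))\<^sup>2)"
      by (rule exp_converges)
    then have s: "(\<lambda>k. (\<Sum>j\<in>UNIV. (cmod (z $ j))\<^sup>2) ^ k / fact k) sums exp (\<Sum>j\<in>UNIV. (cmod (z $ j))\<^sup>2)"
      by (simp add: divide_inverse mult.commute)
    have nn: "0 \<le> (\<Sum>j\<in>UNIV. (cmod (z $ j))\<^sup>2) ^ n / fact n" for n
      by (intro divide_nonneg_pos zero_le_power sum_nonneg) auto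
    show ?thesis
      using sum_le_suminf[OF sums_summable[OF s], of "{..<N}"] sums_unique[OF s] nn
      by auto
  qed
  also have "(\<Sum>x\<in>A. (b x)\<^sup>2) = (\<Sum>k<N. \<Sum>g\<in>tup k. (Pc cs k g)\<^sup>2 / fact k)"
    unfolding A_def b_def
    by (subst sum.Sigma) (auto simp: power_divide intro!: sum.cong)
  also have "\<dots> = (\<Sum>k<N. (\<Sum>g\<in>tup k. (Pc cs k g)\<^sup>2) / fact k)"
    by (simp add: sum_divide_distrib[symmetric])
  also have "\<dots> \<le> pre_norm_sq cs"
  proof -
    have nn: "0 \<le> (\<Sum>g\<in>tup n. (Pc cs n g)\<^sup>2) / fact n" for n
      by (intro divide_nonneg_pos sum_nonneg) auto
    show ?thesis
      using sum_le_suminf[OF sums_summable[OF pre_norm_series[of cs]], of "{..<N}"] sums_unique[OF pre_norm_series[of cs]] nn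
      by auto
  qed
  finally have le2: "(\<Sum>x\<in>A. a x * b x)\<^sup>2 \<le> exp (\<Sum>j\<in>UNIV. (cmod (z $ j))\<^sup>2) * pre_norm_sq cs"
    by (simp add: mult_right_mono pre_norm_nonneg sum_nonneg)
  have "(cmod (\<Sum>k<N. (\<Sum>g\<in>tup k. monot z g k * complex_of_real (Pc cs k g)) / complex_of_real (fact k)))\<^sup>2
     \<le> (\<Sum>x\<in>A. a x * b x)\<^sup>2"
    by (rule power_mono[OF le1 norm_ge_zero])
  with le2 show ?thesis by linarith
qed

lemma ceval_bound:
  "(cmod (ceval cs z))\<^sup>2 \<le> pre_norm_sq cs * exp (2 * (\<Sum>j\<in>UNIV. (Im (z $ j))\<^sup>2))"
proof -
  define S where "S = ceval cs z / phic z"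
  define E where "E = exp (\<Sum>j\<in>UNIV. (cmod (z $ j))\<^sup>2)"
  have ne: "phic z \<noteq> 0" by (simp add: phic_def)
  have lim: "(\<lambda>N. \<Sum>k<N. (\<Sum>g\<in>tup k. monot z g k * complex_of_real (Pc cs k g)) / complex_of_real (fact k)) \<longlonglongrightarrow> S"
    using ceval_series[of z cs] unfolding S_def sums_def .
  have "(\<lambda>N. (cmod (\<Sum>k<N. (\<Sum>g\<in>tup k. monot z g k * complex_of_real (Pc cs k g)) / complex_of_real (fact k)))\<^sup>2)
      \<longlonglongrightarrow> (cmod S)\<^sup>2"
    by (intro tendsto_power tendsto_norm lim)
  then have S2: "(cmod S)\<^sup>2 \<le> E * pre_norm_sq cs"
    by (rule LIMSEQ_le_const2) (use partial_bound E_def in auto)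
  have ceq: "ceval cs z = phic z * S" using ne by (simp add: S_def)
  have p2: "(cmod (phic z))\<^sup>2 * E = exp (2 * (\<Sum>j\<in>UNIV. (Im (z $ j))\<^sup>2))"
  proof -
    have "(cmod (phic z))\<^sup>2 = exp (- (\<Sum>j\<in>UNIV. Re ((z $ j)\<^sup>2)))"
      by (simp add: phic_def norm_exp_eq_Re Re_sum power2_eq_square flip: exp_add)
    then have "(cmod (phic z))\<^sup>2 * E = exp (\<Sum>j\<in>UNIV. (cmod (z $ j))\<^sup>2 - Re ((z $ j)\<^sup>2))"
      by (simp add: E_def sum_subtractf flip: exp_add)
    also have "(\<Sum>j\<in>UNIV. (cmod (z $ j))\<^sup>2 - Re ((z $ j)\<^sup>2)) = 2 * (\<Sum>j\<in>UNIV. (Im (z $ j))\<^sup>2)"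
      by (simp add: cmod_power2 Re_power2 sum_distrib_left)
    finally show ?thesis .
  qed
  have "(cmod (ceval cs z))\<^sup>2 = (cmod (phic z))\<^sup>2 * (cmod S)\<^sup>2"
    by (simp add: ceq norm_mult power_mult_distrib)
  also have "\<dots> \<le> (cmod (phic z))\<^sup>2 * (E * pre_norm_sq cs)"
    by (rule mult_left_mono[OF S2]) simp
  also have "\<dots> = pre_norm_sq cs * exp (2 * (\<Sum>j\<in>UNIV. (Im (z $ j))\<^sup>2))"
    using p2 by (simp add: algebra_simps)
  finally show ?thesis .
qed


lemma ceval_bound':
  "cmod (ceval cs z) \<le> pn cs * exp (\<Sum>j\<in>UNIV. (Im (z $ j))\<^sup>2)"
proof (rule power2_le_imp_le)
  show "(cmod (ceval cs z))\<^sup>2 \<le> (pn cs * exp (\<Sum>j\<in>UNIV. (Im (z $ j))\<^sup>2))\<^sup>2"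
    using ceval_bound[of cs z]
    by (simp add: power_mult_distrib pn_sq flip: exp_of_nat_mult exp_double)
  show "0 \<le> pn cs * exp (\<Sum>j\<in>UNIV. (Im (z $ j))\<^sup>2)" using pn_nonneg[of cs] by simp
qed

definition zl :: "real^'n \<Rightarrow> real^'n \<Rightarrow> complex \<Rightarrow> complex^'n" where
  "zl x0 v w = (\<chi> j. complex_of_real (x0 $ j) + w * complex_of_real (v $ j))"

lemma zl_Im: "(\<Sum>j\<in>UNIV. (Im (zl x0 v w $ j))\<^sup>2) = (Im w)\<^sup>2 * (norm v)\<^sup>2"
  by (simp add: zl_def norm_sq_sum power_mult_distrib sum_distrib_left)

lemma zl_real: "zl x0 v (complex_of_real t) = cvec (x0 + t *\<^sub>R v)"
  by (simp add: zl_def cvec_def vec_eq_iff)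

lemma ceval_zl_holo: "(\<lambda>w. ceval cs (zl x0 v w)) holomorphic_on UNIV"
proof (induction cs)
  case Nil then show ?case by (simp add: ceval_def)
next
  case (Cons a cs)
  have e: "(\<lambda>w. ceval (a#cs) (zl x0 v w)) = (\<lambda>w. complex_of_real (fst a) *
      exp (- (\<Sum>j\<in>UNIV. (complex_of_real (x0 $ j) + w * complex_of_real (v $ j) - complex_of_real (snd a $ j))\<^sup>2) / 2)
      + ceval cs (zl x0 v w))"
    by (simp add: ceval_def KC_def zl_def split_def)
  show ?case unfolding e
    by (intro holomorphic_intros Cons) auto
qed

lemma extension:
  assumes s: "approximates s f"
  shows "\<exists>L. L holomorphic_on UNIV \<and>
    (\<forall>t. L (complex_of_real t) = complex_of_real (f (x0 + t *\<^sub>R v))) \<and>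
    (\<forall>w. cmod (L w) \<le> native_norm f * exp ((Im w)\<^sup>2 * (norm v)\<^sup>2))"
proof -
  define S where "S k w = ceval (s k) (zl x0 v w)" for k w
  define L where "L w = lim (\<lambda>k. S k w)" for w
  have ucauchy: "uniformly_Cauchy_on (cball (0::complex) r) S" for r
  proof (rule uniformly_Cauchy_onI)
    fix e :: real assume "e > 0"
    define B where "B = exp (r\<^sup>2 * (norm v)\<^sup>2)"
    have "B > 0" by (simp add: B_def)
    then obtain N where N: "\<forall>m\<ge>N. \<forall>k\<ge>N. pn (pre_diff (s m) (s k)) < e / B"
      using approx_cauchy_pn[OF s, of "e/B"] \<open>e > 0\<close> by auto
    show "\<exists>M. \<forall>x\<in>cball 0 r. \<forall>m\<ge>M. \<forall>n\<ge>M. dist (S m x) (S n x) < e"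
    proof (intro exI[of _ N] ballI allI impI)
      fix w :: complex and m k :: nat assume w: "w \<in> cball 0 r" and m: "m \<ge> N" and k: "k \<ge> N"
      have "dist (S m w) (S k w) = cmod (ceval (pre_diff (s m) (s k)) (zl x0 v w))"
        by (simp add: S_def dist_norm ceval_diff)
      also have "\<dots> \<le> pn (pre_diff (s m) (s k)) * exp ((Im w)\<^sup>2 * (norm v)\<^sup>2)"
        using ceval_bound'[of "pre_diff (s m) (s k)" "zl x0 v w"] by (simp add: zl_Im)
      also have "\<dots> \<le> pn (pre_diff (s m) (s k)) * B"
      proof (rule mult_left_mono[OF _ pn_nonneg])
        have "\<bar>Im w\<bar> \<le> r" using w abs_Im_le_cmod[of w] by (simp add: dist_norm)
        then have "\<bar>Im w\<bar>\<^sup>2 \<le> r\<^sup>2" by (intro power_mono) auto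
        then have "(Im w)\<^sup>2 \<le> r\<^sup>2" by simp
        then show "exp ((Im w)\<^sup>2 * (norm v)\<^sup>2) \<le> B"
          unfolding B_def by (intro exp_mono mult_right_mono) auto
      qed
      also have "\<dots> < e / B * B"
        using N m k \<open>B > 0\<close> by (intro mult_strict_right_mono) auto
      also have "\<dots> = e" using \<open>B > 0\<close> by simp
      finally show "dist (S m w) (S k w) < e" .
    qed
  qed
  have ulim: "uniform_limit (cball (0::complex) r) S L sequentially" for r
    using Cauchy_uniformly_convergent[OF ucauchy[of r]]
    unfolding uniformly_convergent_uniform_limit_iff L_def .
  have ptw: "(\<lambda>k. S k w) \<longlonglongrightarrow> L w" for w
    by (rule tendsto_uniform_limitI[OF ulim[of "cmod w"]]) simp
  have Sholo: "S k holomorphic_on UNIV" for k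
    unfolding S_def by (rule ceval_zl_holo)
  have holo: "L holomorphic_on UNIV"
    unfolding holomorphic_on_def
  proof
    fix w :: complex
    obtain "continuous_on (cball 0 (cmod w + 1)) L" "L holomorphic_on ball 0 (cmod w + 1)"
    proof (rule holomorphic_uniform_limit[OF _ ulim])
      show "\<forall>\<^sub>F n in sequentially. continuous_on (cball 0 (cmod w + 1)) (S n) \<and> S n holomorphic_on ball 0 (cmod w + 1)"
      proof (intro always_eventually allI conjI)
        fix n
        show "continuous_on (cball 0 (cmod w + 1)) (S n)"
          by (rule holomorphic_on_imp_continuous_on[OF holomorphic_on_subset[OF Sholo]]) simp
        show "S n holomorphic_on ball 0 (cmod w + 1)"
          by (rule holomorphic_on_subset[OF Sholo]) simp
      qed
    qed auto
    then have "L field_differentiable (at w)"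
      by (intro holomorphic_on_imp_differentiable_at[of L "ball 0 (cmod w + 1)"]) auto
    then show "L field_differentiable (at w within UNIV)" by simp
  qed
  have real: "L (complex_of_real t) = complex_of_real (f (x0 + t *\<^sub>R v))" for t
  proof -
    have "(\<lambda>k. S k (complex_of_real t)) \<longlonglongrightarrow> complex_of_real (f (x0 + t *\<^sub>R v))"
    proof -
      have "(\<lambda>k. complex_of_real (pre_eval (s k) (x0 + t *\<^sub>R v))) \<longlonglongrightarrow> complex_of_real (f (x0 + t *\<^sub>R v))"
        using s unfolding approximates_def by (intro tendsto_of_real) auto
      then show ?thesis by (simp add: S_def zl_real ceval_real)
    qed
    with ptw show ?thesis using LIMSEQ_unique by blast
  qed
  have bnd: "cmod (L w) \<le> native_norm f * exp ((Im w)\<^sup>2 * (norm v)\<^sup>2)" for w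
  proof (rule tendsto_le[OF trivial_limit_sequentially])
    show "(\<lambda>k. pn (s k) * exp ((Im w)\<^sup>2 * (norm v)\<^sup>2)) \<longlonglongrightarrow> native_norm f * exp ((Im w)\<^sup>2 * (norm v)\<^sup>2)"
      by (intro tendsto_mult tendsto_const native_norm_lim[OF s])
    show "(\<lambda>k. cmod (S k w)) \<longlonglongrightarrow> cmod (L w)" by (intro tendsto_norm ptw)
    show "\<forall>\<^sub>F k in sequentially. cmod (S k w) \<le> pn (s k) * exp ((Im w)\<^sup>2 * (norm v)\<^sup>2)"
    proof (intro always_eventually allI)
      fix k
      show "cmod (S k w) \<le> pn (s k) * exp ((Im w)\<^sup>2 * (norm v)\<^sup>2)"
        using ceval_bound'[of "s k" "zl x0 v w"] by (simp add: S_def zl_Im)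
    qed
  qed
  show ?thesis using holo real bnd by blast
qed


lemma BC_lemma:
  fixes f :: "complex \<Rightarrow> complex"
  assumes holo: "f holomorphic_on ball 0 R" and R: "R > 0" and f0: "f 0 = 0" and M: "M > 0"
    and re: "\<And>u. cmod u < R \<Longrightarrow> Re (f u) < M" and w: "cmod w < R"
  shows "cmod (f w) \<le> 2 * M * cmod w / (R - cmod w)"
proof -
  have den: "2 * M - f u \<noteq> 0" if "cmod u < R" for u
  proof
    assume "2 * M - f u = 0"
    then have "Re (f u) = 2 * M" by (metis Re_complex_of_real complex_of_real_mult_Complex eq_iff_diff_eq_0 of_real_numeral)
    with re[OF that] M show False by simp
  qed
  have lt: "cmod (f u) < cmod (2 * M - f u)" if "cmod u < R" for u
  proof -
    have p: "0 < M * (M - Re (f u))" using re[OF that] M by simp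
    have "(cmod (2 * M - f u))\<^sup>2 - (cmod (f u))\<^sup>2 = 4 * (M * (M - Re (f u)))"
      unfolding cmod_power2 by (simp add: power2_eq_square algebra_simps)
    then have "(cmod (f u))\<^sup>2 < (cmod (2 * M - f u))\<^sup>2" using p by linarith
    then show ?thesis by (rule power2_less_imp_less) simp
  qed
  define g where "g u = f (of_real R * u) / (2 * M - f (of_real R * u))" for u
  have sc: "cmod (of_real R * u) < R" if "cmod u < 1" for u
    using that R by (simp add: norm_mult)
  have gholo: "g holomorphic_on ball 0 1"
  proof -
    have "(f \<circ> (\<lambda>u. of_real R * u)) holomorphic_on ball 0 1"
      by (rule holomorphic_on_compose_gen[OF _ holo]) (auto intro!: holomorphic_intros simp: sc)
    then have h1: "(\<lambda>u. f (of_real R * u)) holomorphic_on ball 0 1" by (simp add: o_def)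
    show ?thesis unfolding g_def
      by (intro holomorphic_intros h1) (use den sc in auto)
  qed
  have g0: "g 0 = 0" by (simp add: g_def f0)
  have gl1: "cmod (g u) < 1" if "cmod u < 1" for u
    using lt[OF sc[OF that]] den[OF sc[OF that]] by (simp add: g_def norm_divide divide_less_eq)
  define u where "u = w / of_real R"
  have u1: "cmod u < 1" using w R by (simp add: u_def norm_divide)
  have gu: "cmod (g u) \<le> cmod u"
    using Schwarz_Lemma(1)[OF gholo g0 gl1 u1] .
  have Ru: "of_real R * u = w" using R by (simp add: u_def)
  have geq: "f w = 2 * M * g u / (1 + g u)"
  proof -
    have "g u * (2 * M - f w) = f w" using den[OF w] by (simp add: g_def Ru)
    then have "f w * (1 + g u) = 2 * M * g u" by (simp add: algebra_simps)
    moreover have "1 + g u \<noteq> 0"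
    proof
      assume "1 + g u = 0" then have "g u = -1" by (simp add: add_eq_0_iff)
      with gl1[OF u1] show False by simp
    qed
    ultimately show ?thesis by (simp add: field_simps)
  qed
  have "cmod (1 + g u) \<ge> 1 - cmod (g u)"
    using norm_triangle_ineq4[of "1 + g u" "g u"] by simp
  then have "2 * M * cmod (g u) / cmod (1 + g u) \<le> 2 * M * cmod (g u) / (1 - cmod (g u))"
    using gl1[OF u1] M by (intro divide_left_mono mult_pos_pos) auto
  then have "cmod (f w) \<le> 2 * M * cmod (g u) / (1 - cmod (g u))"
    using M unfolding geq by (simp add: norm_mult norm_divide)
  also have "\<dots> \<le> 2 * M * cmod u / (1 - cmod u)"
    using gu u1 M gl1[OF u1] by (simp add: field_simps mult_left_mono mult_right_mono)
  also have "\<dots> = 2 * M * cmod w / (R - cmod w)"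
    using R w by (simp add: u_def norm_divide field_simps)
  finally show ?thesis .
qed

lemma affine_entire:
  fixes h :: "complex \<Rightarrow> complex"
  assumes holo: "h holomorphic_on UNIV" and A: "A \<ge> 0" and B: "B \<ge> 0"
    and im: "\<And>w. \<bar>Im (h w)\<bar> \<le> A * cmod w + B"
  shows "h w = h 0 + deriv h 0 * w"
proof -
  have diffb: "cmod (h z - h 0) \<le> 4 * A * cmod z + 4 * B + 2" for z
  proof (cases "z = 0")
    case True then show ?thesis using A B by simp
  next
    case False
    define R where "R = 2 * cmod z"
    define M where "M = A * R + 2 * B + 1"
    define f where "f u = - \<i> * (h u - h 0)" for u
    have R: "R > 0" using False by (simp add: R_def)
    have "A * R \<ge> 0" using A R by simp
    then have M: "M > 0" using B by (simp add: M_def)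
    have "cmod (f z) \<le> 2 * M * cmod z / (R - cmod z)"
    proof (rule BC_lemma[OF _ R _ M])
      show "f holomorphic_on ball 0 R" unfolding f_def
        by (intro holomorphic_intros holomorphic_on_subset[OF holo]) auto
      show "f 0 = 0" by (simp add: f_def)
      show "cmod z < R" using False by (simp add: R_def)
      fix u :: complex assume u: "cmod u < R"
      have "Re (f u) = Im (h u) - Im (h 0)" by (simp add: f_def)
      also have "\<dots> \<le> (A * cmod u + B) + B"
        using im[of u] im[of 0] by (simp add: abs_le_iff)
      also have "\<dots> \<le> A * R + 2 * B" using u A by (simp add: mult_left_mono)
      finally show "Re (f u) < M" by (simp add: M_def)
    qed
    also have "\<dots> = 2 * M" using False by (simp add: R_def field_simps)
    finally have "cmod (f z) \<le> 2 * M" .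
    moreover have "cmod (f z) = cmod (h z - h 0)" by (simp add: f_def norm_mult)
    ultimately show ?thesis by (simp add: M_def R_def algebra_simps)
  qed
  have "h w = (\<Sum>k\<le>1. (deriv ^^ k) h 0 / fact k * w ^ k)"
  proof (rule Liouville_polynomial[OF holo, of 1 "cmod (h 0) + 4 * A + 4 * B + 2"])
    fix z :: complex assume z: "1 \<le> cmod z"
    have "cmod (h z) \<le> cmod (h 0) + cmod (h z - h 0)"
      using norm_triangle_ineq[of "h 0" "h z - h 0"] by simp
    also have "\<dots> \<le> cmod (h 0) + 4 * A * cmod z + 4 * B + 2" using diffb[of z] by simp
    also have "\<dots> \<le> (cmod (h 0) + 4 * A + 4 * B + 2) * cmod z ^ 1"
    proof -
      have "(cmod (h 0) + 4 * B + 2) * 1 \<le> (cmod (h 0) + 4 * B + 2) * cmod z"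
        using z B by (intro mult_left_mono) auto
      then show ?thesis by (simp add: algebra_simps)
    qed
    finally show "cmod (h z) \<le> (cmod (h 0) + 4 * A + 4 * B + 2) * cmod z ^ 1" .
  qed
  then show ?thesis by (simp add: atMost_Suc)
qed


lemma zl_alt: "zl x0 v = (\<lambda>w. cvec x0 + w *s cvec v)"
  by (auto simp: zl_def cvec_def vec_eq_iff)

lemma G_line_holo:
  fixes G :: "complex^'n::finite \<Rightarrow> complex^'m::finite"
  assumes "entire_map G"
  shows "(\<lambda>w. G (zl x0 v w) $ j) holomorphic_on UNIV"
  unfolding holomorphic_on_def
proof
  fix w :: complex
  obtain L where dG: "(G has_derivative L) (at (zl x0 v w))" and lin: "\<And>c u. L (c *s u) = c *s L u"
    using assms unfolding entire_map_def by blast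
  define l where "l h = h *s cvec v" for h :: complex
  have "linear l"
    by (rule linearI) (simp_all add: l_def vec_eq_iff algebra_simps)
  then have bl: "bounded_linear l" by (simp add: linear_conv_bounded_linear)
  have dz: "(zl x0 v has_derivative l) (at w)"
  proof -
    have dl: "(l has_derivative l) (at w)" by (rule bounded_linear_imp_has_derivative[OF bl])
    have "((\<lambda>w. cvec x0 + l w) has_derivative (\<lambda>h. 0 + l h)) (at w)"
      by (rule has_derivative_add[OF has_derivative_const dl])
    moreover have e: "(\<lambda>w. cvec x0 + w *s cvec v) = (\<lambda>w. cvec x0 + l w)" by (simp add: l_def)
    ultimately show ?thesis unfolding zl_alt e by simp
  qed
  have "((G \<circ> zl x0 v) has_derivative (L \<circ> l)) (at w)"
    by (rule diff_chain_at[OF dz dG])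
  then have "((\<lambda>w. (G \<circ> zl x0 v) w $ j) has_derivative (\<lambda>h. (L \<circ> l) h $ j)) (at w)"
    by (rule bounded_linear.has_derivative[OF bounded_linear_vec_nth])
  moreover have "(\<lambda>h. (L \<circ> l) h $ j) = (*) (L (cvec v) $ j)"
    by (auto simp: l_def lin)
  ultimately have "((\<lambda>w. G (zl x0 v w) $ j) has_field_derivative (L (cvec v) $ j)) (at w)"
    by (simp add: has_field_derivative_def o_def)
  then show "(\<lambda>w. G (zl x0 v w) $ j) field_differentiable at w within UNIV"
    unfolding field_differentiable_def by auto
qed

lemma gauss_approx: "approximates (\<lambda>_. [(1,a)]) (\<lambda>y. gauss_kernel y a)"
  unfolding approximates_def
  by (simp add: pre_norm_sq_def pre_diff_def pre_eval_def)

lemma gauss_native: "(\<lambda>y. gauss_kernel y a) \<in> native_space"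
  unfolding native_space_def using gauss_approx by blast

lemma gauss_norm: "native_norm (\<lambda>y. gauss_kernel y a) = 1"
proof -
  have "(\<lambda>k. pn [(1,a)]) \<longlonglongrightarrow> native_norm (\<lambda>y. gauss_kernel y a)"
    by (rule native_norm_lim[OF gauss_approx])
  moreover have "pn [(1,a)] = 1" by (simp add: pn_def pre_norm_sq_def)
  ultimately have "(\<lambda>k. 1) \<longlonglongrightarrow> native_norm (\<lambda>y. gauss_kernel y a)" by simp
  then show ?thesis by (rule LIMSEQ_unique[OF tendsto_const, symmetric])
qed

lemma zero_islimpt_Reals: "(0::complex) islimpt \<real>"
  unfolding islimpt_approachable
  apply (intro allI impI)
  subgoal for d
    apply (rule bexI[where x="complex_of_real (d/2)"])
     apply (simp add: dist_norm)
    apply (rule Reals_of_real)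
    done
  done

lemma sqrt_bound_helper:
  fixes x P Q :: real
  assumes "x\<^sup>2 \<le> P + Q\<^sup>2" "P \<ge> 0" "Q \<ge> 0"
  shows "\<bar>x\<bar> \<le> sqrt P + Q"
proof (rule power2_le_imp_le)
  have s2: "(sqrt P)\<^sup>2 = P" using assms(2) by (rule real_sqrt_pow2)
  have e: "(sqrt P + Q)\<^sup>2 = P + Q\<^sup>2 + 2 * sqrt P * Q" by (simp only: power2_sum s2)
  have nn: "0 \<le> 2 * sqrt P * Q" using assms(2,3) by simp
  have "\<bar>x\<bar>\<^sup>2 = x\<^sup>2" by (rule power2_abs)
  then show "\<bar>x\<bar>\<^sup>2 \<le> (sqrt P + Q)\<^sup>2" unfolding e using assms(1) nn by linarith
  show "0 \<le> sqrt P + Q" using assms(2,3) by simp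
qed

lemma im_bound:
  fixes F :: "real^'n::finite \<Rightarrow> real^'n" and G :: "complex^'n \<Rightarrow> complex^'n"
  assumes eG: "entire_map G" and hG: "\<And>x. G (cvec x) = cvec (F x)"
    and kb: "koopman_bounded F"
  shows "\<exists>D\<ge>0. \<forall>x0 v w. (\<Sum>j\<in>UNIV. (Im (G (zl x0 v w) $ j))\<^sup>2) \<le> D + 2 * ((Im w)\<^sup>2 * (norm v)\<^sup>2)"
proof -
  obtain C where mem: "\<And>g. g \<in> native_space \<Longrightarrow> g \<circ> F \<in> native_space"
    and C: "\<And>g. g \<in> native_space \<Longrightarrow> native_norm (g \<circ> F) \<le> C * native_norm g"
    using kb unfolding koopman_bounded_def by blast
  define M where "M = max C 1"
  have M1: "M \<ge> 1" by (simp add: M_def)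
  have "\<forall>x0 v w. (\<Sum>j\<in>UNIV. (Im (G (zl x0 v w) $ j))\<^sup>2) \<le> 2 * ln M + 2 * ((Im w)\<^sup>2 * (norm v)\<^sup>2)"
  proof (intro allI)
    fix x0 v :: "real^'n" and w :: complex
    define z where "z = G (zl x0 v w)"
    define a where "a = (\<chi> j. Re (z $ j))"
    define g where "g = (\<lambda>y. gauss_kernel y a)"
    have gF: "g \<circ> F \<in> native_space" unfolding g_def by (rule mem[OF gauss_native])
    have nF: "native_norm (g \<circ> F) \<le> M"
      using C[OF gauss_native[of a]] gauss_norm[of a] by (simp add: g_def M_def)
    obtain s where s: "approximates s (g \<circ> F)" using gF unfolding native_space_def by blast
    obtain L where Lh: "L holomorphic_on UNIV"
      and Lr: "\<And>t. L (complex_of_real t) = complex_of_real ((g \<circ> F) (x0 + t *\<^sub>R v))"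
      and Lb: "\<And>w. cmod (L w) \<le> native_norm (g \<circ> F) * exp ((Im w)\<^sup>2 * (norm v)\<^sup>2)"
      using extension[OF s, of x0 v] by blast
    define E where "E u = KC (G (zl x0 v u)) a" for u
    have Eh: "E holomorphic_on UNIV"
    proof -
      have "(\<lambda>u. KC (G (zl x0 v u)) a) holomorphic_on UNIV"
        unfolding KC_def by (intro holomorphic_intros G_line_holo[OF eG]) auto
      then show ?thesis unfolding E_def[abs_def] .
    qed
    have Er: "E (complex_of_real t) = L (complex_of_real t)" for t
      by (simp add: E_def Lr zl_real hG KC_real g_def)
    have LE: "L w - E w = 0"
    proof (rule analytic_continuation[of "\<lambda>u. L u - E u" UNIV \<real> 0])
      show "(\<lambda>u. L u - E u) holomorphic_on UNIV" by (intro holomorphic_intros Lh Eh)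
      show "(0::complex) islimpt \<real>" using zero_islimpt_Reals by simp
      fix u :: complex assume "u \<in> \<real>"
      then obtain t where "u = complex_of_real t" by (auto elim: Reals_cases)
      then show "L u - E u = 0" using Er by simp
    qed auto
    have sq: "(\<Sum>j\<in>UNIV. (z $ j - complex_of_real (a $ j))\<^sup>2) = - complex_of_real (\<Sum>j\<in>UNIV. (Im (z $ j))\<^sup>2)"
    proof -
      have "(z $ j - complex_of_real (a $ j))\<^sup>2 = - complex_of_real ((Im (z $ j))\<^sup>2)" for j
        by (simp add: a_def complex_eq_iff power2_eq_square)
      then show ?thesis by (simp add: sum_negf)
    qed
    have cE: "cmod (E w) = exp ((\<Sum>j\<in>UNIV. (Im (z $ j))\<^sup>2) / 2)"
    proof -
      have "E w = exp (complex_of_real ((\<Sum>j\<in>UNIV. (Im (z $ j))\<^sup>2) / 2))"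
        unfolding E_def KC_def z_def[symmetric] sq by simp
      then show ?thesis by (simp only: norm_exp_eq_Re Re_complex_of_real)
    qed
    have "exp ((\<Sum>j\<in>UNIV. (Im (z $ j))\<^sup>2) / 2) = cmod (L w)" using LE cE by simp
    also have "\<dots> \<le> M * exp ((Im w)\<^sup>2 * (norm v)\<^sup>2)"
      using Lb[of w] nF by (meson exp_ge_zero mult_right_mono order_trans)
    also have "\<dots> = exp (ln M + (Im w)\<^sup>2 * (norm v)\<^sup>2)"
      using M1 by (simp add: exp_add)
    finally have "(\<Sum>j\<in>UNIV. (Im (z $ j))\<^sup>2) / 2 \<le> ln M + (Im w)\<^sup>2 * (norm v)\<^sup>2"
      by simp
    then show "(\<Sum>j\<in>UNIV. (Im (G (zl x0 v w) $ j))\<^sup>2) \<le> 2 * ln M + 2 * ((Im w)\<^sup>2 * (norm v)\<^sup>2)"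
      by (simp add: z_def)
  qed
  moreover have "2 * ln M \<ge> 0" using M1 by simp
  ultimately show ?thesis by blast
qed

lemma line_affine:
  fixes F :: "real^'n::finite \<Rightarrow> real^'n"
  assumes re: "real_entire F" and kb: "koopman_bounded F"
  shows "\<exists>d. \<forall>t. F (x0 + t *\<^sub>R v) = F x0 + t *\<^sub>R d"
proof -
  obtain G :: "complex^'n \<Rightarrow> complex^'n" where eG: "entire_map G"
    and hG0: "\<And>x. G (\<chi> i. complex_of_real (x $ i)) = (\<chi> j. complex_of_real (F x $ j))"
    using re unfolding real_entire_def by blast
  have hG: "G (cvec x) = cvec (F x)" for x using hG0 by (simp add: cvec_def)
  obtain D where D: "D \<ge> 0"
    and Db: "\<And>x0 v w. (\<Sum>j\<in>UNIV. (Im (G (zl x0 v w) $ j))\<^sup>2) \<le> D + 2 * ((Im w)\<^sup>2 * (norm v)\<^sup>2)"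
    using im_bound[OF eG hG kb] by blast
  define h where "h j w = G (zl x0 v w) $ j" for j w
  have aff: "h j w = h j 0 + deriv (h j) 0 * w" for j w
  proof (rule affine_entire)
    show "h j holomorphic_on UNIV" unfolding h_def by (rule G_line_holo[OF eG])
    show "0 \<le> sqrt 2 * norm v" by simp
    show "0 \<le> sqrt D" using D by simp
    fix u :: complex
    have "(Im (h j u))\<^sup>2 \<le> (\<Sum>j\<in>UNIV. (Im (G (zl x0 v u) $ j))\<^sup>2)"
      unfolding h_def by (rule member_le_sum) auto
    also have "\<dots> \<le> D + 2 * ((Im u)\<^sup>2 * (norm v)\<^sup>2)" by (rule Db)
    also have "\<dots> \<le> D + (sqrt 2 * norm v * cmod u)\<^sup>2"
    proof -
      have "(Im u)\<^sup>2 \<le> (cmod u)\<^sup>2" using abs_Im_le_cmod[of u]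
        by (metis abs_ge_zero power2_abs power_mono)
      then have "2 * ((Im u)\<^sup>2 * (norm v)\<^sup>2) \<le> 2 * ((cmod u)\<^sup>2 * (norm v)\<^sup>2)"
        by (intro mult_left_mono mult_right_mono) auto
      also have "\<dots> = (sqrt 2 * norm v * cmod u)\<^sup>2"
        by (simp add: power_mult_distrib)
      finally show ?thesis by simp
    qed
    finally show "\<bar>Im (h j u)\<bar> \<le> sqrt 2 * norm v * cmod u + sqrt D"
      using sqrt_bound_helper[of "Im (h j u)" D "sqrt 2 * norm v * cmod u"] D by simp
  qed
  have hr: "h j (complex_of_real t) = complex_of_real (F (x0 + t *\<^sub>R v) $ j)" for j t
    unfolding h_def zl_real hG by (simp add: cvec_def)
  have h0: "h j 0 = complex_of_real (F x0 $ j)" for j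
    using hr[of j 0] by simp
  define d where "d = (\<chi> j. Re (deriv (h j) 0))"
  have "F (x0 + t *\<^sub>R v) = F x0 + t *\<^sub>R d" for t
  proof -
    have "F (x0 + t *\<^sub>R v) $ j = F x0 $ j + t * Re (deriv (h j) 0)" for j
    proof -
      have "complex_of_real (F (x0 + t *\<^sub>R v) $ j) = complex_of_real (F x0 $ j) + deriv (h j) 0 * complex_of_real t"
        using aff[of j "complex_of_real t"] by (simp add: hr h0)
      then have "Re (complex_of_real (F (x0 + t *\<^sub>R v) $ j)) = Re (complex_of_real (F x0 $ j) + deriv (h j) 0 * complex_of_real t)"
        by simp
      then show ?thesis by (simp add: mult.commute)
    qed
    then show ?thesis by (simp add: vec_eq_iff d_def)
  qed
  then show ?thesis by blast
qed

theorem corollary1: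
  fixes F :: "real^'n \<Rightarrow> real^'n"
  assumes "real_entire F"
    and "koopman_bounded F"
  shows "\<exists>(A :: real^'n^'n) (b :: real^'n). \<forall>x. F x = A *v x + b"
proof -
  have la: "\<exists>d. \<forall>t. F (x0 + t *\<^sub>R v) = F x0 + t *\<^sub>R d" for x0 v
    by (rule line_affine[OF assms])
  define g where "g x = F x - F 0" for x
  have hom: "g (t *\<^sub>R x) = t *\<^sub>R g x" for t x
  proof -
    obtain d where d: "\<And>t. F (0 + t *\<^sub>R x) = F 0 + t *\<^sub>R d" using la[of 0 x] by blast
    have "F x = F 0 + d" using d[of 1] by simp
    then show ?thesis using d[of t] by (simp add: g_def)
  qed
  have add: "g (x + y) = g x + g y" for x y
  proof -
    obtain d where d: "\<And>t. F (x + t *\<^sub>R (y - x)) = F x + t *\<^sub>R d" using la[of x "y - x"] by blast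
    have d1: "F y = F x + d" using d[of 1] by simp
    have "F (x + (1/2) *\<^sub>R (y - x)) = F x + (1/2) *\<^sub>R d" by (rule d)
    moreover have "x + (1/2) *\<^sub>R (y - x) = (1/2) *\<^sub>R (x + y)" by (auto simp: vec_eq_iff field_simps)
    ultimately have m: "F ((1/2) *\<^sub>R (x + y)) = F x + (1/2) *\<^sub>R d" by simp
    have "g ((1/2) *\<^sub>R (x + y)) = (1/2) *\<^sub>R (g x + g y)"
      unfolding g_def m d1 by (simp add: vec_eq_iff field_simps)
    then have "(1/2) *\<^sub>R g (x + y) = (1/2) *\<^sub>R (g x + g y)" by (simp add: hom)
    then have "(2::real) *\<^sub>R ((1/2) *\<^sub>R g (x + y)) = (2::real) *\<^sub>R ((1/2) *\<^sub>R (g x + g y))"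
      by (rule arg_cong)
    then show ?thesis by (simp only: scaleR_scaleR) simp
  qed
  have lin: "linear g" by (rule linearI) (simp_all add: add hom)
  have "F x = matrix g *v x + F 0" for x
  proof -
    have lin': "Vector_Spaces.linear (*s) (*s) g" using lin unfolding scalar_mult_eq_scaleR by (force simp: linear_def real_scaleR_def[abs_def])
    show ?thesis using matrix_works[OF lin', of x] by (simp add: g_def)
  qed
  then show ?thesis by blast
qed

end
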